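(* For $K>K^*:=\frac{b\sigma_1}{b-\mu_0}$ let $R(K)$ denote the $R$-component of the unique equilibrium $G_3(K)=(S^*,I_1^*,0,0,R^* )$ with positive $S^*,I_1^*,R^*$ (so $R(K)$ is the unique root in $(0,S^{**}-\sigma_1)$ of $f(R,K)=\big(S^{**}-\sigma_1-R+\frac{K}{b}(\mu_0-\mu_4')\big)R+\frac{\rho_1}{\alpha_1}(S^{**}-\sigma_1-R)=0$, where $S^{**}=\frac{K}{b}(b-\mu_0)$). Then $K\mapsto R(K)$ is differentiable on $(K^*,\infty)$ and $$0<K\frac{dR}{dK}<\sigma_1+R(K).$$
   Context: Consider, for $t\ge0$, the system $S'=\big(b(1-\tfrac{N}{K})-\alpha_1I_1-\alpha_2I_2-(\beta_1+\beta_2+\alpha_3)I_{12}-\mu_0\big)S$, $I_1'=\big(b(1-\tfrac{N}{K})+\alpha_1S-\eta_1I_{12}-\gamma_1I_2-\mu_1\big)I_1+\beta_1SI_{12}$, $I_2'=\big(b(1-\tfrac{N}{K})+\alpha_2S-\eta_2I_{12}-\gamma_2I_1-\mu_2\big)I_2+\beta_2SI_{12}$, $I_{12}'=\big(b(1-\tfrac{N}{K})+\alpha_3S+\eta_1I_1+\eta_2I_2-\mu_3\big)I_{12}+(\gamma_1+\gamma_2)I_1I_2$, $R'=\big(b(1-\tfrac{N}{K})-\mu_4'\big)R+\rho_1I_1+\rho_2I_2+\rho_3I_{12}$, where $N=S+I_1+I_2+I_{12}+R$. All parameters $b,K,\alpha_i,\beta_i,\gamma_i,\eta_i,\rho_i,\mu_0,\mu_i'$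 are positive and $\mu_i=\rho_i+\mu_i'$ for $i=1,2,3$; $K$ is regarded as a varying parameter, the others fixed. Standing assumptions: $b>\mu_0$, $b>\mu_i$ ($i=1,2,3$), $b>\mu_4'$, and $\mu_0<\mu_4'<\mu_j'$ for $j=1,2,3$. Set $\sigma_k=(\mu_k-\mu_0)/\alpha_k$ ($k=1,2,3$), assumed to satisfy $\sigma_1<\sigma_2<\sigma_3$. *)

theory Defs
  imports "HOL-Analysis.Analysis"
begin

text \<open>Parameters of the model. mu1p, mu2p, mu3p, mu4p stand for mu_1', mu_2', mu_3', mu_4';
  the carrying capacity K is kept separate since it is the varying parameter.\<close>
record params =
  b :: real
  al1 :: real  al2 :: real  al3 :: real
  be1 :: real  be2 :: real
  ga1 :: real  ga2 :: real
  et1 :: real  et2 :: real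
  rh1 :: real  rh2 :: real  rh3 :: real
  mu0 :: real
  mu1p :: real  mu2p :: real  mu3p :: real  mu4p :: real

definition mu1 :: "params \<Rightarrow> real" where "mu1 p = rh1 p + mu1p p"
definition mu2 :: "params \<Rightarrow> real" where "mu2 p = rh2 p + mu2p p"
definition mu3 :: "params \<Rightarrow> real" where "mu3 p = rh3 p + mu3p p"

definition sigma1 :: "params \<Rightarrow> real" where "sigma1 p = (mu1 p - mu0 p) / al1 p"
definition sigma2 :: "params \<Rightarrow> real" where "sigma2 p = (mu2 p - mu0 p) / al2 p"
definition sigma3 :: "params \<Rightarrow> real" where "sigma3 p = (mu3 p - mu0 p) / al3 p"

definition field :: "params \<Rightarrow> real \<Rightarrow> real \<times> real \<times> real \<times> real \<times> real
                     \<Rightarrow> real \<times> real \<times> real \<times> real \<times> real" where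
  "field p K x = (case x of (S, I1, I2, I12, R) \<Rightarrow>
     (let N = S + I1 + I2 + I12 + R; g = b p * (1 - N / K) in
      ( (g - al1 p * I1 - al2 p * I2 - (be1 p + be2 p + al3 p) * I12 - mu0 p) * S,
        (g + al1 p * S - et1 p * I12 - ga1 p * I2 - mu1 p) * I1 + be1 p * S * I12,
        (g + al2 p * S - et2 p * I12 - ga2 p * I1 - mu2 p) * I2 + be2 p * S * I12,
        (g + al3 p * S + et1 p * I1 + et2 p * I2 - mu3 p) * I12 + (ga1 p + ga2 p) * I1 * I2,
        (g - mu4p p) * R + rh1 p * I1 + rh2 p * I2 + rh3 p * I12 )))"

definition is_G3 :: "params \<Rightarrow> real \<Rightarrow> real \<times> real \<times> real \<Rightarrow> bool" where
  "is_G3 p K y = (case y of (S, I1, R) \<Rightarrow>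
     S > 0 \<and> I1 > 0 \<and> R > 0 \<and> field p K (S, I1, 0, 0, R) = (0, 0, 0, 0, 0))"

definition RK :: "params \<Rightarrow> real \<Rightarrow> real" where
  "RK p K = (THE R. \<exists>S I1. is_G3 p K (S, I1, R))"

definition Kstar :: "params \<Rightarrow> real" where
  "Kstar p = b p * sigma1 p / (b p - mu0 p)"

definition standing_assumptions :: "params \<Rightarrow> bool" where
  "standing_assumptions p \<longleftrightarrow>
     b p > 0 \<and> al1 p > 0 \<and> al2 p > 0 \<and> al3 p > 0 \<and> be1 p > 0 \<and> be2 p > 0 \<and>
     ga1 p > 0 \<and> ga2 p > 0 \<and> et1 p > 0 \<and> et2 p > 0 \<and>
     rh1 p > 0 \<and> rh2 p > 0 \<and> rh3 p > 0 \<and> mu0 p > 0 \<and>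
     mu1p p > 0 \<and> mu2p p > 0 \<and> mu3p p > 0 \<and> mu4p p > 0 \<and>
     b p > mu0 p \<and> b p > mu1 p \<and> b p > mu2 p \<and> b p > mu3 p \<and> b p > mu4p p \<and>
     mu0 p < mu4p p \<and> mu4p p < mu1p p \<and> mu4p p < mu2p p \<and> mu4p p < mu3p p \<and>
     sigma1 p < sigma2 p \<and> sigma2 p < sigma3 p"

end

theory Submission
  imports Defs
begin

lemma quad_root:
  fixes A c r :: real
  assumes r: "r > 0" and A: "A > 0"
  defines "B \<equiv> A + c - r"
  defines "s \<equiv> sqrt (B^2 + 4*r*A)"
  defines "R \<equiv> (B + s)/2"
  shows "R > 0" "(A - R + c)*R + r*(A - R) = 0" "s > 0" "s^2 = B^2 + 4*r*A"
proof -
  have "4*r*A > 0" using r A by simp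
  then have pos: "B^2 + 4*r*A > 0" by (rule add_nonneg_pos[OF zero_le_power2])
  show s2: "s^2 = B^2 + 4*r*A" unfolding s_def using pos by simp
  have "s > \<bar>B\<bar>" unfolding s_def
    by (rule real_less_rsqrt) (use \<open>4*r*A > 0\<close> in simp)
  then have bs1: "B < s" "- B < s" by (simp_all add: abs_less_iff)
  show "R > 0" unfolding R_def using bs1 by simp
  show "s > 0" using bs1 by simp
  have e1: "(A - R + c)*R + r*(A - R) = -(R^2) + B*R + r*A" by (simp add: B_def algebra_simps power2_eq_square)
  have e2: "-(R^2) + B*R + r*A = (B^2 - s^2)/4 + r*A" unfolding R_def by (simp add: field_simps power2_eq_square)
  show "(A - R + c)*R + r*(A - R) = 0" unfolding e1 e2 s2 by simp
qed

lemma deriv_core: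
  fixes a c r s1 K :: real
  assumes gp: "0 < (a*K - s1 + c*K - r)^2 + 4*r*(a*K - s1)"
  shows "((\<lambda>K. (a*K - s1 + c*K - r + sqrt((a*K - s1 + c*K - r)^2 + 4*r*(a*K - s1)))/2) has_real_derivative
     ((a + c) + (2*(a*K - s1 + c*K - r)*(a+c) + 4*r*a)/(2 * sqrt((a*K - s1 + c*K - r)^2 + 4*r*(a*K - s1))))/2) (at K)"
proof -
  define g where "g = (\<lambda>K::real. (a*K - s1 + c*K - r)^2 + 4*r*(a*K - s1))"
  define g' where "g' = 2*(a*K - s1 + c*K - r)*(a+c) + 4*r*a"
  have dl: "((\<lambda>K. a*K - s1 + c*K - r) has_real_derivative (a+c)) (at K)"
    by (auto intro!: derivative_eq_intros)
  have dg: "(g has_real_derivative g') (at K)" unfolding g_def g'_def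
    by (auto intro!: derivative_eq_intros simp: algebra_simps)
  have gK: "0 < g K" using gp g_def by simp
  have dsq: "((\<lambda>K. sqrt (g K)) has_real_derivative inverse (sqrt (g K)) / 2 * g') (at K)"
    by (rule DERIV_chain2[OF DERIV_real_sqrt[OF gK] dg])
  have X: "((\<lambda>K. (a*K - s1 + c*K - r + sqrt (g K))/2) has_real_derivative ((a+c) + inverse (sqrt (g K)) / 2 * g')/2) (at K)"
    by (rule DERIV_cdivide[OF DERIV_add[OF dl dsq]])
  have eqn: "inverse (sqrt (g K)) / 2 * g' = g'/(2 * sqrt (g K))" by (simp add: field_simps)
  show ?thesis using X unfolding eqn unfolding g_def g'_def .
qed

lemma ineq_core:
  fixes a cc r s1 K :: real
  assumes K: "K > 0" and r: "r > 0" and s1: "s1 > 0" and Ap: "a*K - s1 > 0" and cn: "cc*K < 0"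
  defines "A \<equiv> a*K - s1"
  defines "B \<equiv> A + cc*K - r"
  defines "s \<equiv> sqrt (B^2 + 4*r*A)"
  defines "R \<equiv> (B + s)/2"
  defines "D \<equiv> ((a + cc) + (2*B*(a+cc) + 4*r*a)/(2* s))/2"
  shows "0 < K*D \<and> K*D < s1 + R"
proof -
  have A: "A > 0" using Ap A_def by simp
  note q = quad_root[OF r A, of "cc*K", folded B_def, folded s_def, folded R_def]
  have Rp: "R > 0" and f: "(A - R + cc*K)*R + r*(A - R) = 0" and sp: "s > 0" using q by auto
  have RA: "R < A"
  proof (rule ccontr)
    assume "\<not> R < A"
    then have "(A - R + cc*K)*R < 0" using cn Rp by (simp add: mult_neg_pos)
    moreover have "r*(A - R) \<le> 0" using \<open>\<not> R < A\<close> r by (simp add: mult_nonneg_nonpos)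
    ultimately show False using f by linarith
  qed
  have sD: "s*D = (a+cc)*R + r*a" unfolding D_def R_def using sp by (simp add: field_simps)
  have "K*(s*D) = (A + s1 + cc*K)*R + r*(A+s1)" unfolding sD A_def by (simp add: algebra_simps)
  also have "\<dots> = (s1+R)*(R+r)" using f by (simp add: algebra_simps)
  finally have KsD: "s*(K*D) = (s1+R)*(R+r)" by (simp add: algebra_simps)
  have pos: "(s1+R)*(R+r) > 0" using s1 Rp r by simp
  have KD: "K*D = (s1+R)*(R+r)/s" using KsD sp by (simp add: field_simps)
  have "r*(A - R) > 0" using RA r by simp
  then have "(A - R + cc*K)*R < 0" using f by linarith
  then have "A - R + cc*K < 0" using Rp by (simp add: mult_less_0_iff)
  moreover have "2*R = A + cc*K - r + s" unfolding R_def B_def by simp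
  ultimately have sR: "s > R + r" by linarith
  have "(s1+R)*(R+r) < (s1+R)* s" using sR s1 Rp by simp
  then have "(s1+R)*(R+r)/s < s1 + R" using sp by (simp add: divide_less_eq mult.commute)
  then show ?thesis using KD pos sp by simp
qed
lemma core_fwd:
  fixes b K a1 I R s1 m0 m4 rh :: real
  assumes b: "b > 0" and K: "K > 0" and a1: "a1 > 0"
    and eq: "a1*I = b*(1-(s1+R)/K) - m0"
    and e5: "(m0 + a1*I - m4)*R + rh*I = 0"
  shows "((b-m0)/b*K - s1 - R + (m0-m4)/b*K)*R + rh/a1*((b-m0)/b*K - s1 - R) = 0"
proof -
  let ?A = "(b-m0)/b*K - s1"
  have h0: "b/K*(?A - R) = b*(1-(s1+R)/K) - m0" using b K by (simp add: field_simps)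
  have h: "a1*I = b/K*(?A - R)" using eq h0 by simp
  have ri: "rh*I = rh/a1*(a1*I)" using a1 by simp
  have e5': "(m0 - m4 + b/K*(?A - R))*R + rh/a1*(b/K*(?A - R)) = 0"
    using e5 unfolding ri h by (simp add: algebra_simps)
  have "((b-m0)/b*K - s1 - R + (m0-m4)/b*K)*R + rh/a1*((b-m0)/b*K - s1 - R)
     = K/b * ((m0 - m4 + b/K*(?A - R))*R + rh/a1*(b/K*(?A - R)))"
    using b K a1 by (simp add: field_simps)
  then show ?thesis using e5' by simp
qed

lemma quad_unique:
  fixes A c r R :: real
  assumes r: "r > 0" and A: "A > 0" and R: "R > 0" and f: "(A - R + c)*R + r*(A - R) = 0"
  shows "R = (A + c - r + sqrt ((A + c - r)^2 + 4*r*A))/2"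
proof -
  let ?B = "A + c - r"
  have sq: "(2*R - ?B)^2 = ?B^2 + 4*r*A" using f by (simp add: algebra_simps power2_eq_square)
  have "R*(2*R - ?B) = R^2 + r*A" using f by (simp add: algebra_simps power2_eq_square)
  also have "\<dots> > 0" using r A R by (simp add: add_pos_pos)
  finally have "2*R - ?B > 0" using R by (simp add: zero_less_mult_iff)
  then have "sqrt (?B^2 + 4*r*A) = 2*R - ?B" using sq by (intro real_sqrt_unique) simp_all
  then show ?thesis by simp
qed

lemma core_bwd:
  fixes b K a1 I R s1 m0 m4 rh :: real
  assumes b: "b > 0" and K: "K > 0" and a1: "a1 > 0"
    and eq: "a1*I = b*(1-(s1+R)/K) - m0"
    and f: "((b-m0)/b*K - s1 - R + (m0-m4)/b*K)*R + rh/a1*((b-m0)/b*K - s1 - R) = 0"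
  shows "(m0 + a1*I - m4)*R + rh*I = 0" "a1*I = b/K*((b-m0)/b*K - s1 - R)"
    "a1*I*(R + rh/a1) = (m4-m0)*R"
proof -
  let ?A = "(b-m0)/b*K - s1"
  have h0: "b/K*(?A - R) = b*(1-(s1+R)/K) - m0" using b K by (simp add: field_simps)
  show h: "a1*I = b/K*(?A - R)" using eq h0 by simp
  have ri: "rh*I = rh/a1*(a1*I)" using a1 by simp
  have "(m0 - m4 + b/K*(?A - R))*R + rh/a1*(b/K*(?A - R))
     = b/K * (((b-m0)/b*K - s1 - R + (m0-m4)/b*K)*R + rh/a1*((b-m0)/b*K - s1 - R))"
    using b K a1 by (simp add: field_simps)
  also have "\<dots> = 0" using f by simp
  finally show "(m0 + a1*I - m4)*R + rh*I = 0" unfolding ri h by (simp add: algebra_simps)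
  have g1: "(?A - R)*(R + rh/a1) + (m0-m4)/b*K*R = ((b-m0)/b*K - s1 - R + (m0-m4)/b*K)*R + rh/a1*((b-m0)/b*K - s1 - R)"
    using b a1 by (simp add: field_simps)
  have "(?A - R)*(R + rh/a1) + (m0-m4)/b*K*R = 0" using g1 f by simp
  then have g2: "(?A - R)*(R + rh/a1) = - ((m0-m4)/b*K*R)" by (simp add: eq_neg_iff_add_eq_0)
  have "a1*I*(R + rh/a1) = b/K*((?A - R)*(R + rh/a1))" unfolding h by simp
  also have "\<dots> = b/K*(- ((m0-m4)/b*K*R))" unfolding g2 ..
  also have "\<dots> = (m4-m0)*R" using b K by (simp add: field_simps)
  finally show "a1*I*(R + rh/a1) = (m4-m0)*R" .
qed

lemma field_eq:
  "field p K (S,I1,0,0,R) = (0,0,0,0,0) \<longleftrightarrow>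
   (b p * (1 - (S+I1+R)/K) - al1 p * I1 - mu0 p) * S = 0 \<and>
   (b p * (1 - (S+I1+R)/K) + al1 p * S - mu1 p) * I1 = 0 \<and>
   (b p * (1 - (S+I1+R)/K) - mu4p p) * R + rh1 p * I1 = 0"
  by (simp add: field_def Let_def)

definition aK :: "params \<Rightarrow> real" where "aK p = (b p - mu0 p)/b p"
definition cK :: "params \<Rightarrow> real" where "cK p = (mu0 p - mu4p p)/b p"
definition rq :: "params \<Rightarrow> real" where "rq p = rh1 p / al1 p"
definition Rf :: "params \<Rightarrow> real \<Rightarrow> real" where
  "Rf p K = (aK p*K - sigma1 p + cK p*K - rq p + sqrt((aK p*K - sigma1 p + cK p*K - rq p)^2 + 4*rq p*(aK p*K - sigma1 p)))/2"
definition I1f :: "params \<Rightarrow> real \<Rightarrow> real" where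
  "I1f p K = (b p*(1 - (sigma1 p + Rf p K)/K) - mu0 p)/al1 p"

lemma basics:
  assumes "standing_assumptions p"
  shows "b p > 0" "al1 p > 0" "rh1 p > 0" "mu0 p < mu4p p" "mu4p p < mu1 p" "sigma1 p > 0"
    "b p > mu0 p" "al1 p * sigma1 p = mu1 p - mu0 p" "rq p > 0" "Kstar p > 0"
proof -
  show b: "b p > 0" "al1 p > 0" "rh1 p > 0" "mu0 p < mu4p p" "b p > mu0 p"
    using assms by (auto simp: standing_assumptions_def)
  show m: "mu4p p < mu1 p" using assms by (auto simp: standing_assumptions_def mu1_def)
  show s: "sigma1 p > 0" using b m by (simp add: sigma1_def)
  show "al1 p * sigma1 p = mu1 p - mu0 p" using b by (simp add: sigma1_def)
  show "rq p > 0" using b by (simp add: rq_def)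
  show "Kstar p > 0" using b s by (simp add: Kstar_def)
qed

lemma A_pos:
  assumes sa: "standing_assumptions p" and K: "K > Kstar p"
  shows "aK p*K - sigma1 p > 0" "K > 0"
proof -
  note bs = basics[OF sa]
  show K0: "K > 0" using bs(10) K by simp
  have "b p * sigma1 p / (b p - mu0 p) < K" using K by (simp add: Kstar_def)
  then have "b p * sigma1 p < K * (b p - mu0 p)" using bs(7) by (simp add: pos_divide_less_eq)
  then have "sigma1 p < K * (b p - mu0 p) / b p" using bs(1) by (simp add: pos_less_divide_eq mult.commute)
  then show "aK p*K - sigma1 p > 0" using bs(1) by (simp add: aK_def field_simps)
qed

lemma G3_fwd:
  assumes sa: "standing_assumptions p" and K: "K > Kstar p" and G: "is_G3 p K (S, I1, R)"
  shows "R = Rf p K \<and> I1 = I1f p K \<and> S = sigma1 p - I1f p K"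
proof -
  note bs = basics[OF sa]
  note Ap = A_pos[OF sa K]
  have pos: "S > 0" "I1 > 0" "R > 0" and fe: "field p K (S,I1,0,0,R) = (0,0,0,0,0)"
    using G by (auto simp: is_G3_def)
  define g where "g = b p * (1 - (S+I1+R)/K)"
  have e1: "(g - al1 p * I1 - mu0 p) * S = 0" and e2: "(g + al1 p * S - mu1 p) * I1 = 0"
    and e5: "(g - mu4p p) * R + rh1 p * I1 = 0" using fe unfolding field_eq g_def by auto
  have e1': "g - al1 p * I1 - mu0 p = 0" using e1 pos by simp
  have e2': "g + al1 p * S - mu1 p = 0" using e2 pos by simp
  have "al1 p * (S + I1) = al1 p * sigma1 p" using e1' e2' bs(8) by (simp add: algebra_simps)
  then have SI: "S + I1 = sigma1 p" using bs(2) by simp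
  have gg: "g = b p * (1 - (sigma1 p + R)/K)" unfolding g_def SI[symmetric] by (simp add: add.assoc)
  have eq: "al1 p * I1 = b p * (1 - (sigma1 p + R)/K) - mu0 p" using e1' gg by simp
  have e5': "(mu0 p + al1 p * I1 - mu4p p)*R + rh1 p * I1 = 0" using e5 e1' by (simp add: algebra_simps)
  have f: "((b p - mu0 p)/b p*K - sigma1 p - R + (mu0 p - mu4p p)/b p*K)*R + rh1 p/al1 p*((b p - mu0 p)/b p*K - sigma1 p - R) = 0"
    by (rule core_fwd[OF bs(1) Ap(2) bs(2) eq e5'])
  have f': "(aK p*K - sigma1 p - R + cK p*K)*R + rq p*(aK p*K - sigma1 p - R) = 0"
    using f unfolding aK_def cK_def rq_def .
  have RR: "R = Rf p K" using quad_unique[OF bs(9) Ap(1) pos(3) f'] unfolding Rf_def by simp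
  have II: "I1 = I1f p K" unfolding I1f_def RR[symmetric] using eq bs(2) by (simp add: field_simps)
  show ?thesis using RR II SI by simp
qed

lemma G3_bwd:
  assumes sa: "standing_assumptions p" and K: "K > Kstar p"
  shows "is_G3 p K (sigma1 p - I1f p K, I1f p K, Rf p K)"
proof -
  note bs = basics[OF sa]
  note Ap = A_pos[OF sa K]
  define R where "R = Rf p K"
  define I where "I = I1f p K"
  define S where "S = sigma1 p - I"
  note q = quad_root[OF bs(9) Ap(1), of "cK p*K"]
  have Rp: "R > 0" and f': "(aK p*K - sigma1 p - R + cK p*K)*R + rq p*(aK p*K - sigma1 p - R) = 0"
    using q(1,2) unfolding R_def Rf_def by (simp_all add: algebra_simps)
  have cn: "cK p * K < 0" using bs(1,4) Ap(2) by (simp add: cK_def mult_neg_pos divide_neg_pos)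
  have RA: "R < aK p*K - sigma1 p"
  proof (rule ccontr)
    assume na: "\<not> R < aK p*K - sigma1 p"
    then have "(aK p*K - sigma1 p - R + cK p*K)*R < 0" using cn Rp by (simp add: mult_neg_pos)
    moreover have "rq p*(aK p*K - sigma1 p - R) \<le> 0" using na bs(9) by (simp add: mult_nonneg_nonpos)
    ultimately show False using f' by linarith
  qed
  have f: "((b p - mu0 p)/b p*K - sigma1 p - R + (mu0 p - mu4p p)/b p*K)*R + rh1 p/al1 p*((b p - mu0 p)/b p*K - sigma1 p - R) = 0"
    using f' unfolding aK_def cK_def rq_def .
  have eq: "al1 p * I = b p * (1 - (sigma1 p + R)/K) - mu0 p"
    unfolding I_def I1f_def R_def using bs(2) by simp
  note cb = core_bwd[OF bs(1) Ap(2) bs(2) eq f]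
  have "b p / K * ((b p - mu0 p)/b p*K - sigma1 p - R) > 0"
    using RA bs(1) Ap(2) by (simp add: aK_def)
  then have "0 < al1 p * I" by (simp only: cb(2))
  then have Ip: "I > 0" using bs(2) by (simp add: zero_less_mult_iff)
  have "al1 p * I * (R + rq p) = (mu4p p - mu0 p)*R" using cb(3) unfolding rq_def .
  also have "\<dots> < (mu4p p - mu0 p)*(R + rq p)" using bs(4,9) by simp
  also have "\<dots> < (mu1 p - mu0 p)*(R + rq p)" using bs(5,9) Rp by simp
  finally have "al1 p * I < mu1 p - mu0 p" using Rp bs(9) by (simp add: mult_less_cancel_right)
  then have "al1 p * I < al1 p * sigma1 p" using bs(8) by simp
  then have Sp: "S > 0" unfolding S_def using bs(2) by simp
  have SIR: "S + I + R = sigma1 p + R" unfolding S_def by simp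
  have gI: "b p * (1 - (sigma1 p + R)/K) = mu0 p + al1 p * I" using eq by simp
  have z2: "mu0 p + al1 p * I + al1 p * S - mu1 p = 0" unfolding S_def using bs(8)
    by (simp add: algebra_simps)
  have "field p K (S,I,0,0,R) = (0,0,0,0,0)"
    unfolding field_eq SIR gI using z2 cb(1) by simp
  then show ?thesis using Sp Ip Rp unfolding is_G3_def S_def I_def R_def by simp
qed

lemma RK_eq:
  assumes sa: "standing_assumptions p" and K: "K > Kstar p"
  shows "RK p K = Rf p K"
  unfolding RK_def
proof (rule the_equality)
  show "\<exists>S I1. is_G3 p K (S, I1, Rf p K)" using G3_bwd[OF sa K] by blast
next
  fix R assume "\<exists>S I1. is_G3 p K (S, I1, R)"
  then show "R = Rf p K" using G3_fwd[OF sa K] by blast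
qed

theorem proposition4:
  fixes p :: params
  assumes "standing_assumptions p"
  shows "(\<forall>K > Kstar p. \<exists>!y. is_G3 p K y) \<and>
         (\<forall>K > Kstar p. \<exists>D. (RK p has_real_derivative D) (at K) \<and>
                             0 < K * D \<and> K * D < sigma1 p + RK p K)"
proof (intro conjI allI impI)
  fix K assume K: "K > Kstar p"
  show "\<exists>!y. is_G3 p K y"
  proof (rule ex1I[of _ "(sigma1 p - I1f p K, I1f p K, Rf p K)"])
    show "is_G3 p K (sigma1 p - I1f p K, I1f p K, Rf p K)" by (rule G3_bwd[OF assms K])
  next
    fix y assume "is_G3 p K y"
    then obtain S I1 R where y: "y = (S, I1, R)" "is_G3 p K (S, I1, R)" by (cases y) auto
    then show "y = (sigma1 p - I1f p K, I1f p K, Rf p K)" using G3_fwd[OF assms K y(2)] by simp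
  qed
next
  fix K assume K: "K > Kstar p"
  note bs = basics[OF assms]
  note Ap = A_pos[OF assms K]
  have cn: "cK p * K < 0" using bs(1,4) Ap(2) by (simp add: cK_def mult_neg_pos divide_neg_pos)
  let ?B = "aK p*K - sigma1 p + cK p*K - rq p"
  have gp: "0 < ?B^2 + 4*rq p*(aK p*K - sigma1 p)"
    using bs(9) Ap(1) by (intro add_nonneg_pos[OF zero_le_power2]) simp
  note dc = deriv_core[OF gp]
  have Rfe: "Rf p = (\<lambda>K. (aK p*K - sigma1 p + cK p*K - rq p + sqrt((aK p*K - sigma1 p + cK p*K - rq p)^2 + 4*rq p*(aK p*K - sigma1 p)))/2)"
    by (rule ext) (simp add: Rf_def)
  define D where "D = ((aK p + cK p) + (2*?B*(aK p+cK p) + 4*rq p*aK p)/(2 * sqrt(?B^2 + 4*rq p*(aK p*K - sigma1 p))))/2"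
  have d1: "(Rf p has_real_derivative D) (at K)" unfolding Rfe D_def using dc .
  have d2: "(RK p has_real_derivative D) (at K)"
  proof (rule has_field_derivative_transform_within_open[OF d1, of "{Kstar p<..}"])
    show "open {Kstar p<..}" by simp
    show "K \<in> {Kstar p<..}" using K by simp
    fix x assume "x \<in> {Kstar p<..}"
    then show "Rf p x = RK p x" using RK_eq[OF assms] by simp
  qed
  have ic: "0 < K*D \<and> K*D < sigma1 p + Rf p K"
    using ineq_core[OF Ap(2) bs(9) bs(6) Ap(1) cn] unfolding D_def Rf_def by simp
  show "\<exists>D. (RK p has_real_derivative D) (at K) \<and> 0 < K * D \<and> K * D < sigma1 p + RK p K"
    using d2 ic RK_eq[OF assms K] by auto
qed

end
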